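(* Let $q$ be a prime power and let $T\in\mathbb F_q[X,Y,Z]$ be a linear PTR polynomial over $\mathbb F_q$, written as $T(X,Y,Z)=Z+XYZ\,M_1(X,Y,Z)+M_2(X,Y)$ with $M_1(X,Y,Z)=\sum_{i,j,k=0}^{q-3}b_{ijk}X^iY^jZ^k$ and $M_2(X,Y)=\sum_{i,j=1}^{q-2}c_{ij}X^iY^j$. Then $$\sum_{i=0}^{q-3}b_{ijk}=\sum_{i=0}^{q-3}b_{jik}$$ for all $0\le j\le q-3$ and $1\le k\le q-3$.
   Context: A PTR polynomial over $\mathbb F_q$ is a reduced polynomial $T\in\mathbb F_q[X,Y,Z]$ (degree less than $q$ in each variable) satisfying: (a) $T(a,0,z)=T(0,b,z)=z$ for all $a,b,z$; (b) $T(x,1,0)=x$ and $T(1,y,0)=y$ for all $x,y$; (c) for all $a,b,c,d$ with $a\neq c$ there is a unique $x$ with $T(x,a,b)=T(x,c,d)$; (d) for all $a,b,c$ there is a unique $z$ with $T(a,b,z)=c$; (e) for all $a,b,c,d$ with $a\neq c$ there is a unique pair $(y,z)$ with $T(a,y,z)=b$ and $T(c,y,z)=d$ (all variables in $\mathbb F_q$). Every PTR polynomial can be written in the displayed form with these degree bounds. Define $x\oplus y=T(1,x,y)$, $x\odot y=T(x,y,0)$; $T$ is linear if $T(x,y,z)=(x\odot y)\oplus z$ for all $x,y,z\in\mathbb F_q$. *)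

theory Defs
  imports "HOL-Library.Cardinality"
begin

definition ptr_fun :: "('a::{finite,field} \<Rightarrow> 'a \<Rightarrow> 'a \<Rightarrow> 'a) \<Rightarrow> bool" where
  "ptr_fun T \<longleftrightarrow>
     (\<forall>a b z. T a 0 z = z \<and> T 0 b z = z) \<and>
     (\<forall>x y. T x 1 0 = x \<and> T 1 y 0 = y) \<and>
     (\<forall>a b c d. a \<noteq> c \<longrightarrow> (\<exists>!x. T x a b = T x c d)) \<and>
     (\<forall>a b c. \<exists>!z. T a b z = c) \<and>
     (\<forall>a b c d. a \<noteq> c \<longrightarrow> (\<exists>!(y, z). T a y z = b \<and> T c y z = d))"

definition ptr_oplus :: "('a \<Rightarrow> 'a \<Rightarrow> 'a \<Rightarrow> 'a) \<Rightarrow> 'a \<Rightarrow> 'a \<Rightarrow> 'a::{finite,field}" where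
  "ptr_oplus T x y = T 1 x y"

definition ptr_odot :: "('a \<Rightarrow> 'a \<Rightarrow> 'a \<Rightarrow> 'a) \<Rightarrow> 'a \<Rightarrow> 'a \<Rightarrow> 'a::{finite,field}" where
  "ptr_odot T x y = T x y 0"

definition ptr_linear :: "('a::{finite,field} \<Rightarrow> 'a \<Rightarrow> 'a \<Rightarrow> 'a) \<Rightarrow> bool" where
  "ptr_linear T \<longleftrightarrow> (\<forall>x y z. T x y z = ptr_oplus T (ptr_odot T x y) z)"

text \<open>It is reduced (degree < q in each variable), so it is determined by its function.\<close>
definition M1 :: "(nat \<Rightarrow> nat \<Rightarrow> nat \<Rightarrow> 'a) \<Rightarrow> 'a \<Rightarrow> 'a \<Rightarrow> 'a \<Rightarrow> 'a::{finite,field}" where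
  "M1 b x y z = (\<Sum>i\<in>{..<CARD('a) - 2}. \<Sum>j\<in>{..<CARD('a) - 2}. \<Sum>k\<in>{..<CARD('a) - 2}.
                    b i j k * x ^ i * y ^ j * z ^ k)"

definition M2 :: "(nat \<Rightarrow> nat \<Rightarrow> 'a) \<Rightarrow> 'a \<Rightarrow> 'a \<Rightarrow> 'a::{finite,field}" where
  "M2 c x y = (\<Sum>i\<in>{1..CARD('a) - 2}. \<Sum>j\<in>{1..CARD('a) - 2}. c i j * x ^ i * y ^ j)"

definition T_form :: "(nat \<Rightarrow> nat \<Rightarrow> nat \<Rightarrow> 'a) \<Rightarrow> (nat \<Rightarrow> nat \<Rightarrow> 'a) \<Rightarrow> 'a \<Rightarrow> 'a \<Rightarrow> 'a \<Rightarrow> 'a::{finite,field}" where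
  "T_form b c x y z = z + x * y * z * M1 b x y z + M2 c x y"

end

theory Submission
  imports Defs "HOL-Computational_Algebra.Polynomial"
begin

lemma uni:
  fixes f :: "nat \<Rightarrow> 'a::{finite,field}"
  assumes h: "\<And>z. z \<noteq> 0 \<Longrightarrow> (\<Sum>k<CARD('a) - 2. f k * z ^ k) = 0"
    and kN: "k < CARD('a) - 2"
  shows "f k = 0"
proof -
  define N where "N = CARD('a) - 2"
  define p where "p = (\<Sum>m<N. monom (f m) m)"
  have cp: "coeff p k = f k" using kN unfolding p_def N_def
    by (simp add: coeff_sum)
  have pp: "poly p z = (\<Sum>m<N. f m * z ^ m)" for z
    unfolding p_def by (simp add: poly_sum poly_monom)
  show ?thesis
  proof (cases "p = 0")
    case True then show ?thesis using cp by simp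
  next
    case False
    have dg: "degree p \<le> N - 1" unfolding p_def
      by (rule degree_sum_le) (auto intro: order.trans[OF degree_monom_le])
    have sub: "UNIV - {0} \<subseteq> {x. poly p x = 0}" using h pp N_def by auto
    have "card (UNIV - {0::'a}) \<le> card {x. poly p x = 0}"
      by (rule card_mono[OF poly_roots_finite[OF False] sub])
    also have "\<dots> \<le> degree p" by (rule card_poly_roots_bound[OF False])
    finally have "CARD('a) - 1 \<le> N - 1" using dg by (simp add: card_Diff_singleton)
    then show ?thesis using kN N_def by linarith
  qed
qed

lemma swap3: "(\<Sum>i\<in>A. \<Sum>j\<in>B. \<Sum>k\<in>C. g i j k) = (\<Sum>k\<in>C. \<Sum>i\<in>A. \<Sum>j\<in>B. g i j k)"
proof -
  have "(\<Sum>i\<in>A. \<Sum>j\<in>B. \<Sum>k\<in>C. g i j k) = (\<Sum>i\<in>A. \<Sum>k\<in>C. \<Sum>j\<in>B. g i j k)"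
    by (rule sum.cong[OF refl], rule sum.swap)
  also have "\<dots> = (\<Sum>k\<in>C. \<Sum>i\<in>A. \<Sum>j\<in>B. g i j k)" by (rule sum.swap)
  finally show ?thesis .
qed

theorem corollary4p9:
  fixes b :: "nat \<Rightarrow> nat \<Rightarrow> nat \<Rightarrow> 'a::{finite,field}"
    and c :: "nat \<Rightarrow> nat \<Rightarrow> 'a"
  assumes "ptr_fun (T_form b c)"
    and "ptr_linear (T_form b c)"
    and "j < CARD('a) - 2"
    and "1 \<le> k" and "k < CARD('a) - 2"
  shows "(\<Sum>i\<in>{..<CARD('a) - 2}. b i j k) = (\<Sum>i\<in>{..<CARD('a) - 2}. b j i k)"
proof -
  define N where "N = CARD('a) - 2"
  define T where "T = T_form b c"
  have T10: "T x 1 0 = x" "T 1 x 0 = x" for x using assms(1) unfolding ptr_fun_def T_def by auto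
  have h1: "T x 1 z = T 1 x z" for x z
    using assms(2) T10 unfolding ptr_linear_def ptr_oplus_def ptr_odot_def T_def by metis
  have M2a: "M2 c x 1 = x" "M2 c 1 x = x" for x using T10[of x] unfolding T_def T_form_def by auto
  have h2: "M1 b x 1 z = M1 b 1 x z" if "x \<noteq> 0" "z \<noteq> 0" for x z
  proof -
    have "x * z * M1 b x 1 z = x * z * M1 b 1 x z"
      using h1[of x z] M2a[of x] unfolding T_def T_form_def by (simp add: algebra_simps)
    then show ?thesis using that by simp
  qed
  define A where "A m kk = (\<Sum>jj<N. b m jj kk)" for m kk
  define B where "B m kk = (\<Sum>i<N. b i m kk)" for m kk
  have e1: "M1 b x 1 z = (\<Sum>kk<N. (\<Sum>m<N. A m kk * x ^ m) * z ^ kk)" for x z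
  proof -
    have "M1 b x 1 z = (\<Sum>i<N. \<Sum>jj<N. \<Sum>kk<N. b i jj kk * x ^ i * z ^ kk)"
      unfolding M1_def N_def by simp
    also have "\<dots> = (\<Sum>kk<N. \<Sum>i<N. \<Sum>jj<N. b i jj kk * x ^ i * z ^ kk)" by (rule swap3)
    also have "\<dots> = (\<Sum>kk<N. (\<Sum>m<N. A m kk * x ^ m) * z ^ kk)"
      unfolding A_def by (simp add: sum_distrib_right)
    finally show ?thesis .
  qed
  have e2: "M1 b 1 x z = (\<Sum>kk<N. (\<Sum>m<N. B m kk * x ^ m) * z ^ kk)" for x z
  proof -
    have "M1 b 1 x z = (\<Sum>i<N. \<Sum>jj<N. \<Sum>kk<N. b i jj kk * x ^ jj * z ^ kk)"
      unfolding M1_def N_def by simp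
    also have "\<dots> = (\<Sum>kk<N. \<Sum>i<N. \<Sum>jj<N. b i jj kk * x ^ jj * z ^ kk)" by (rule swap3)
    also have "\<dots> = (\<Sum>kk<N. \<Sum>jj<N. \<Sum>i<N. b i jj kk * x ^ jj * z ^ kk)"
      by (rule sum.cong[OF refl], rule sum.swap)
    also have "\<dots> = (\<Sum>kk<N. (\<Sum>m<N. B m kk * x ^ m) * z ^ kk)"
      unfolding B_def by (simp add: sum_distrib_right)
    finally show ?thesis .
  qed
  have h3: "(\<Sum>kk<N. (\<Sum>m<N. (A m kk - B m kk) * x ^ m) * z ^ kk) = 0"
    if "x \<noteq> 0" "z \<noteq> 0" for x z
    using h2[OF that] e1[of x z] e2[of x z]
    by (simp add: left_diff_distrib sum_subtractf)
  have h4: "(\<Sum>m<N. (A m k - B m k) * x ^ m) = 0" if "x \<noteq> 0" for x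
    using uni[where f="\<lambda>kk. \<Sum>m<N. (A m kk - B m kk) * x ^ m"] h3[OF that] assms(5)
    unfolding N_def by blast
  have "A j k - B j k = 0"
    using uni[where f="\<lambda>m. A m k - B m k"] h4 assms(3) unfolding N_def by blast
  then show ?thesis unfolding A_def B_def N_def by simp
qed

end
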